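(* Let $E$ and $E'$ be disjunctive interval multiplicity expressions (DIMEs) over a finite alphabet $\Sigma$. Then $L(E)=L(E')$ if and only if $\Delta_E=\Delta_{E'}$.
   Context: Unordered words are functions $w:\Sigma\to\mathbb{N}_0$; $a\in w$ means $w(a)\neq 0$; $\varepsilon$ is the all-zero word; unordered concatenation $\uplus$ is multiset union, extended to languages pointwise. An interval is $[n,m]$ or $[n,m]^?$ with $n\in\mathbb{N}_0$, $m\in\mathbb{N}_0\cup\{\infty\}$; $L(E^{[n,m]})=\{w_1\uplus\dots\uplus w_i\mid n\le i\le m, w_j\in L(E)\}$, $L(E^{[n,m]^?})=L(E^{[n,m]})\cup\{\varepsilon\}$; the multiplicities $*,+,?,1$ denote $[0,\infty],[1,\infty],[0,1],[1,1]$. Also $L(a)=\{a\}$, $L(E_1\mid E_2)=L(E_1)\cup L(E_2)$, $L(E_1\mathbin{|\hspace{-0.1em}|} E_2)=L(E_1)\uplus L(E_2)$. An atom is $(a_1^{I_1}\mathbin{|\hspace{-0.1em}|}\dots\mathbin{|\hspace{-0.1em}|} a_k^{I_k})$ with $a_i\in\Sigma$ and each $I_i\in\{?,1\}$. A clause is $(A_1^{I_1}\mid\dots\mid A_k^{I_k})$ with atoms $A_i$ and intervals $I_i$; it is simple if each $I_i\in\{?,1\}$. A DIME is $(D_1^{I_1}\mathbin{|\hspace{-0.1em}|}\dots\mathbin{|\hspace{-0.1em}|} D_k^{I_k})$ where for each $i$ either $D_i$ is a simple clause and $I_i\in\{+,*\}$, or $D_i$ is a clause and $I_i\in\{1,?\}$;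 moreover each symbol occurs at most once in the DIME. The characterizing tuple of a DIME $E$ is $\Delta_E=(C_E,N_E,P_E,K_E)$ where $C_E=\{(a,b)\in\Sigma\times\Sigma\mid \neg\exists w\in L(E).\ a\in w\wedge b\in w\}$, $N_E=\{(a,w(a))\mid a\in\Sigma, w\in L(E)\}$, $P_E=\{X\subseteq\Sigma\mid\forall w\in L(E).\ \exists a\in X.\ a\in w\}$, $K_E=\{(a,b)\in\Sigma\times\Sigma\mid\forall w\in L(E).\ w(a)\ge w(b)\}$. *)

theory Defs
  imports Main "HOL-Library.Extended_Nat"
begin

text \<open>Unordered words over a finite alphabet (the finite type 'a) are functions 'a => nat.\<close>
type_synonym 'a uword = "'a \<Rightarrow> nat"

definition eps :: "'a uword" where "eps = (\<lambda>_. 0)"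

definition uconc :: "'a uword \<Rightarrow> 'a uword \<Rightarrow> 'a uword" where
  "uconc u v = (\<lambda>a. u a + v a)"

definition lconc :: "'a uword set \<Rightarrow> 'a uword set \<Rightarrow> 'a uword set" where
  "lconc L1 L2 = {uconc u v | u v. u \<in> L1 \<and> v \<in> L2}"

fun lpow :: "'a uword set \<Rightarrow> nat \<Rightarrow> 'a uword set" where
  "lpow L 0 = {eps}"
| "lpow L (Suc i) = lconc L (lpow L i)"

text \<open>An interval: (n, m, opt) stands for [n,m] if opt is False and [n,m]^? if opt is True;
  m = \<infinity> is allowed.\<close>
type_synonym interval = "nat \<times> enat \<times> bool"

definition valid_interval :: "interval \<Rightarrow> bool" where
  "valid_interval I = (case I of (n, m, _) \<Rightarrow> enat n \<le> m)"

definition I_star :: interval where "I_star = (0, \<infinity>, False)"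
definition I_plus :: interval where "I_plus = (1, \<infinity>, False)"
definition I_opt :: interval where "I_opt = (0, 1, False)"
definition I_one :: interval where "I_one = (1, 1, False)"

datatype 'a expr =
    Sym 'a
  | Disj "'a expr list"
  | UConc "'a expr list"
  | Mult "'a expr" interval

fun lang :: "'a expr \<Rightarrow> 'a uword set" where
  "lang (Sym a) = {(\<lambda>b. if b = a then 1 else 0)}"
| "lang (Disj es) = (\<Union>e\<in>set es. lang e)"
| "lang (UConc es) = foldr (\<lambda>e L. lconc (lang e) L) es {eps}"
| "lang (Mult e (n, m, opt)) =
     (\<Union>{lpow (lang e) i | i. n \<le> i \<and> enat i \<le> m}) \<union> (if opt then {eps} else {})"

fun syms :: "'a expr \<Rightarrow> 'a list" where
  "syms (Sym a) = [a]"
| "syms (Disj es) = concat (map syms es)"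
| "syms (UConc es) = concat (map syms es)"
| "syms (Mult e I) = syms e"

definition is_atom :: "'a expr \<Rightarrow> bool" where
  "is_atom e = (\<exists>xs. e = UConc xs \<and> xs \<noteq> [] \<and>
      (\<forall>x\<in>set xs. \<exists>a I. x = Mult (Sym a) I \<and> I \<in> {I_opt, I_one}))"

definition is_clause :: "'a expr \<Rightarrow> bool" where
  "is_clause e = (\<exists>ys. e = Disj ys \<and> ys \<noteq> [] \<and>
      (\<forall>y\<in>set ys. \<exists>A I. y = Mult A I \<and> is_atom A \<and> valid_interval I))"

definition is_simple_clause :: "'a expr \<Rightarrow> bool" where
  "is_simple_clause e = (\<exists>ys. e = Disj ys \<and> ys \<noteq> [] \<and>
      (\<forall>y\<in>set ys. \<exists>A I. y = Mult A I \<and> is_atom A \<and> I \<in> {I_opt, I_one}))"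

definition is_DIME :: "'a expr \<Rightarrow> bool" where
  "is_DIME e = ((\<exists>zs. e = UConc zs \<and> zs \<noteq> [] \<and>
      (\<forall>z\<in>set zs. \<exists>D I. z = Mult D I \<and>
          ((is_simple_clause D \<and> I \<in> {I_plus, I_star}) \<or> (is_clause D \<and> I \<in> {I_one, I_opt}))))
     \<and> distinct (syms e))"

text \<open>Characterizing tuple (C_E, N_E, P_E, K_E); the alphabet is UNIV.\<close>
definition C_of :: "'a expr \<Rightarrow> ('a \<times> 'a) set" where
  "C_of E = {(a, b). \<not> (\<exists>w\<in>lang E. w a \<noteq> 0 \<and> w b \<noteq> 0)}"

definition N_of :: "'a expr \<Rightarrow> ('a \<times> nat) set" where
  "N_of E = {(a, w a) | a w. w \<in> lang E}"

definition P_of :: "'a expr \<Rightarrow> 'a set set" where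
  "P_of E = {X. \<forall>w\<in>lang E. \<exists>a\<in>X. w a \<noteq> 0}"

definition K_of :: "'a expr \<Rightarrow> ('a \<times> 'a) set" where
  "K_of E = {(a, b). \<forall>w\<in>lang E. w a \<ge> w b}"

definition Delta :: "'a expr \<Rightarrow> ('a \<times> 'a) set \<times> ('a \<times> nat) set \<times> 'a set set \<times> ('a \<times> 'a) set" where
  "Delta E = (C_of E, N_of E, P_of E, K_of E)"

end

theory Submission
  imports Defs
begin


definition delta :: "'a \<Rightarrow> 'a uword" where "delta a = (\<lambda>b. if b = a then 1 else 0)"

definition satC :: "'a uword set \<Rightarrow> 'a uword \<Rightarrow> bool" where
 "satC L w = (\<forall>a b. w a \<noteq> 0 \<longrightarrow> w b \<noteq> 0 \<longrightarrow> (\<exists>v\<in>L. v a \<noteq> 0 \<and> v b \<noteq> 0))"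
definition satN :: "'a uword set \<Rightarrow> 'a uword \<Rightarrow> bool" where
 "satN L w = (\<forall>a. \<exists>v\<in>L. v a = w a)"
definition satP :: "'a uword set \<Rightarrow> 'a uword \<Rightarrow> bool" where
 "satP L w = (\<forall>X. (\<forall>v\<in>L. \<exists>a\<in>X. v a \<noteq> 0) \<longrightarrow> (\<exists>a\<in>X. w a \<noteq> 0))"
definition satK :: "'a uword set \<Rightarrow> 'a uword \<Rightarrow> bool" where
 "satK L w = (\<forall>a b. (\<forall>v\<in>L. v b \<le> v a) \<longrightarrow> w b \<le> w a)"
definition satL :: "'a uword set \<Rightarrow> 'a uword \<Rightarrow> bool" where
 "satL L w = (satC L w \<and> satN L w \<and> satP L w \<and> satK L w)"

definition clsd :: "'a uword set \<Rightarrow> bool" where "clsd L = (\<forall>w. satL L w \<longrightarrow> w \<in> L)"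

definition suppIn :: "'a uword set \<Rightarrow> 'a set \<Rightarrow> bool" where
 "suppIn L S = (\<forall>v\<in>L. \<forall>a. v a \<noteq> 0 \<longrightarrow> a \<in> S)"

definition restr :: "'a uword \<Rightarrow> 'a set \<Rightarrow> 'a uword" where
 "restr w S = (\<lambda>a. if a \<in> S then w a else 0)"

definition atomPow :: "'a set \<Rightarrow> 'a set \<Rightarrow> nat \<Rightarrow> 'a uword set" where
 "atomPow M Op i = {w. (\<forall>a\<in>M. w a = i) \<and> (\<forall>a\<in>Op. w a \<le> i) \<and> (\<forall>a. a \<notin> M \<union> Op \<longrightarrow> w a = 0)}"

definition star :: "'a uword set \<Rightarrow> 'a uword set" where "star L = {w. \<exists>i. w \<in> lpow L i}"

lemma uconc_apply: "uconc u v a = u a + v a" by (simp add: uconc_def)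
lemma eps_apply: "eps a = 0" by (simp add: eps_def)
lemma uconc_eps[simp]: "uconc u eps = u" "uconc eps u = u" by (auto simp: uconc_def eps_def)
lemma uconc_comm: "uconc u v = uconc v u" by (auto simp: uconc_def)
lemma uconc_assoc: "uconc (uconc u v) x = uconc u (uconc v x)" by (auto simp: uconc_def)
lemma eps_iff: "(w = eps) = (\<forall>a. w a = 0)" by (auto simp: eps_def)
lemma uconc_eq_eps: "(uconc u v = eps) = (u = eps \<and> v = eps)" by (auto simp: eps_iff uconc_apply)

lemma lconc_eps[simp]: "lconc L {eps} = L" by (auto simp: lconc_def)
lemma lconc_comm: "lconc L1 L2 = lconc L2 L1" unfolding lconc_def by (metis uconc_comm)
lemma lconc_mem: "u \<in> L1 \<Longrightarrow> v \<in> L2 \<Longrightarrow> uconc u v \<in> lconc L1 L2" by (auto simp: lconc_def)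

lemma lpow_mono: "L \<subseteq> L' \<Longrightarrow> lpow L i \<subseteq> lpow L' i"
  by (induction i) (auto simp: lconc_def)

lemma lpow_add: "u \<in> lpow L i \<Longrightarrow> v \<in> lpow L j \<Longrightarrow> uconc u v \<in> lpow L (i+j)"
proof (induction i arbitrary: u)
  case 0 then show ?case by simp
next
  case (Suc i)
  then obtain x y where "u = uconc x y" "x \<in> L" "y \<in> lpow L i" by (auto simp: lconc_def)
  with Suc show ?case by (auto simp: uconc_assoc intro!: lconc_mem)
qed

lemma lang_Mult: "lang (Mult e (n, m, opt)) =
   {w. \<exists>i. n \<le> i \<and> enat i \<le> m \<and> w \<in> lpow (lang e) i} \<union> (if opt then {eps} else {})"
  unfolding lang.simps by blast

lemma lang_UConc_Cons[simp]: "lang (UConc (x#xs)) = lconc (lang x) (lang (UConc xs))" by simp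
lemma lang_UConc_Nil[simp]: "lang (UConc []) = {eps}" by simp

lemma suppIn_lpow: "suppIn L S \<Longrightarrow> suppIn (lpow L i) S"
  by (induction i) (auto simp: suppIn_def lconc_def uconc_apply eps_apply)

lemma suppIn_lconc: "suppIn L1 S \<Longrightarrow> suppIn L2 T \<Longrightarrow> suppIn (lconc L1 L2) (S \<union> T)"
  by (auto simp: suppIn_def lconc_def uconc_apply)

lemma supp_lang: "suppIn (lang e) (set (syms e))"
proof (induction e)
  case (Sym x) then show ?case by (auto simp: suppIn_def)
next
  case (Disj xs)
  show ?case unfolding suppIn_def
  proof (intro ballI allI impI)
    fix v a assume v: "v \<in> lang (Disj xs)" "v a \<noteq> 0"
    then obtain x where x: "x \<in> set xs" "v \<in> lang x" by auto
    with Disj v have "a \<in> set (syms x)" by (auto simp: suppIn_def)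
    with x show "a \<in> set (syms (Disj xs))" by auto
  qed
next
  case (UConc xs)
  then show ?case
  proof (induction xs)
    case Nil then show ?case by (simp add: suppIn_def eps_apply)
  next
    case (Cons x xs)
    have "suppIn (lconc (lang x) (lang (UConc xs))) (set (syms x) \<union> set (syms (UConc xs)))"
      by (rule suppIn_lconc) (use Cons in auto)
    then show ?case by simp
  qed
next
  case (Mult e I)
  obtain n m opt where I: "I = (n,m,opt)" by (cases I) auto
  show ?case using suppIn_lpow[OF Mult] unfolding I lang_Mult by (auto simp: suppIn_def eps_apply)
qed



lemma satL_N: "satL L w \<Longrightarrow> \<exists>v\<in>L. v a = w a"
  unfolding satL_def satN_def by (elim conjE) (erule allE)
lemma satL_C: "satL L w \<Longrightarrow> w a \<noteq> 0 \<Longrightarrow> w b \<noteq> 0 \<Longrightarrow> \<exists>v\<in>L. v a \<noteq> 0 \<and> v b \<noteq> 0"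
  unfolding satL_def satC_def by auto
lemma satL_P: "satL L w \<Longrightarrow> \<forall>v\<in>L. \<exists>a\<in>X. v a \<noteq> 0 \<Longrightarrow> \<exists>a\<in>X. w a \<noteq> 0"
  unfolding satL_def satP_def by auto
lemma satL_K: "satL L w \<Longrightarrow> \<forall>v\<in>L. v b \<le> v a \<Longrightarrow> w b \<le> w a"
  unfolding satL_def satK_def by auto
lemma satLI: "satC L w \<Longrightarrow> satN L w \<Longrightarrow> satP L w \<Longrightarrow> satK L w \<Longrightarrow> satL L w"
  unfolding satL_def by simp
lemma satL_nonempty: "satL L w \<Longrightarrow> L \<noteq> {}"
  by (drule satL_N[where a=undefined]) auto

lemma satL_eps: "satL L eps \<Longrightarrow> eps \<in> L"
proof (rule ccontr)
  assume s: "satL L eps" and n: "eps \<notin> L"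
  have "\<forall>v\<in>L. \<exists>a\<in>UNIV. v a \<noteq> 0"
  proof
    fix v assume "v \<in> L"
    then have "\<not> (\<forall>a. v a = 0)" using n eps_iff[of v] by auto
    then show "\<exists>a\<in>UNIV. v a \<noteq> 0" by simp
  qed
  from satL_P[OF s this] show False by (simp add: eps_apply)
qed

lemma satL_mono: assumes sub: "L' \<subseteq> L" and s: "satL L' w" shows "satL L w"
proof (rule satLI)
  show "satC L w" unfolding satC_def
  proof (intro allI impI)
    fix a b assume "w a \<noteq> 0" "w b \<noteq> 0"
    then obtain v where "v \<in> L'" "v a \<noteq> 0 \<and> v b \<noteq> 0" using satL_C[OF s] by metis
    then show "\<exists>v\<in>L. v a \<noteq> 0 \<and> v b \<noteq> 0" using sub by auto
  qed
  show "satN L w" unfolding satN_def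
  proof
    fix a obtain v where "v \<in> L'" "v a = w a" using satL_N[OF s] by metis
    then show "\<exists>v\<in>L. v a = w a" using sub by auto
  qed
  show "satP L w" unfolding satP_def
  proof (intro allI impI)
    fix X assume "\<forall>v\<in>L. \<exists>a\<in>X. v a \<noteq> 0"
    then have "\<forall>v\<in>L'. \<exists>a\<in>X. v a \<noteq> 0" using sub by auto
    then show "\<exists>a\<in>X. w a \<noteq> 0" using satL_P[OF s] by auto
  qed
  show "satK L w" unfolding satK_def
  proof (intro allI impI)
    fix a b assume "\<forall>v\<in>L. v b \<le> v a"
    then have "\<forall>v\<in>L'. v b \<le> v a" using sub by auto
    then show "w b \<le> w a" using satL_K[OF s] by auto
  qed
qed

lemma clsd_minus_eps: "clsd L \<Longrightarrow> clsd (L - {eps})"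
  unfolding clsd_def
proof (intro allI impI)
  fix w assume c: "\<forall>w. satL L w \<longrightarrow> w \<in> L" and s: "satL (L - {eps}) w"
  have "satL L w" using satL_mono[OF _ s] by auto
  then have "w \<in> L" using c by auto
  moreover have "w \<noteq> eps" using satL_eps s by auto
  ultimately show "w \<in> L - {eps}" by auto
qed

lemma clsd_eps: "clsd {eps}"
  unfolding clsd_def
proof (intro allI impI)
  fix w assume s: "satL {eps} w"
  have "\<forall>a. w a = 0"
  proof
    fix a obtain v where "v \<in> {eps}" "v a = w a" using satL_N[OF s] by metis
    then show "w a = 0" by (simp add: eps_apply)
  qed
  then show "w \<in> {eps}" using eps_iff[of w] by simp
qed

lemma restr_sat:
  assumes s1: "suppIn L1 S1" and s2: "suppIn L2 S2" and d: "S1 \<inter> S2 = {}"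
    and ne1: "L1 \<noteq> {}" and s: "satL (lconc L1 L2) w"
  shows "satL L1 (restr w S1)"
proof -
  have dec: "\<exists>v1 v2. v = uconc v1 v2 \<and> v1 \<in> L1 \<and> v2 \<in> L2" if "v \<in> lconc L1 L2" for v
    using that by (auto simp: lconc_def)
  have z1: "\<And>v a. v \<in> L1 \<Longrightarrow> a \<notin> S1 \<Longrightarrow> v a = 0" using s1 unfolding suppIn_def by auto
  have z2: "\<And>v a. v \<in> L2 \<Longrightarrow> a \<in> S1 \<Longrightarrow> v a = 0" using s2 d unfolding suppIn_def by auto
  have eq1: "\<exists>v1\<in>L1. (\<forall>b\<in>S1. v b = v1 b)" if vin: "v \<in> lconc L1 L2" for v
  proof -
    obtain v1 v2 where v: "v = uconc v1 v2" "v1 \<in> L1" "v2 \<in> L2" using dec[OF vin] by metis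
    have "\<forall>b\<in>S1. v b = v1 b" using z2[OF v(3)] v(1) by (simp add: uconc_apply)
    then show ?thesis using v(2) by (intro bexI[of _ v1])
  qed
  show ?thesis
  proof (rule satLI)
    show "satC L1 (restr w S1)" unfolding satC_def
    proof (intro allI impI)
      fix a b assume "restr w S1 a \<noteq> 0" "restr w S1 b \<noteq> 0"
      then have ab: "a \<in> S1" "b \<in> S1" "w a \<noteq> 0" "w b \<noteq> 0" by (auto simp: restr_def split: if_splits)
      then obtain v where v: "v \<in> lconc L1 L2" "v a \<noteq> 0" "v b \<noteq> 0" using satL_C[OF s] by metis
      then obtain v1 where "v1 \<in> L1" "\<forall>c\<in>S1. v c = v1 c" using eq1 by metis
      then show "\<exists>v\<in>L1. v a \<noteq> 0 \<and> v b \<noteq> 0" using ab v by (intro bexI[of _ v1]) auto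
    qed
    show "satN L1 (restr w S1)" unfolding satN_def
    proof
      fix a show "\<exists>v\<in>L1. v a = restr w S1 a"
      proof (cases "a \<in> S1")
        case True
        obtain v where v: "v \<in> lconc L1 L2" "v a = w a" using satL_N[OF s] by metis
        then obtain v1 where "v1 \<in> L1" "\<forall>c\<in>S1. v c = v1 c" using eq1 by metis
        then show ?thesis using True v by (intro bexI[of _ v1]) (auto simp: restr_def)
      next
        case False
        obtain v1 where "v1 \<in> L1" using ne1 by auto
        then show ?thesis using False z1 by (intro bexI[of _ v1]) (auto simp: restr_def)
      qed
    qed
    show "satP L1 (restr w S1)" unfolding satP_def
    proof (intro allI impI)
      fix X assume h: "\<forall>v\<in>L1. \<exists>a\<in>X. v a \<noteq> 0"
      have "\<forall>v\<in>lconc L1 L2. \<exists>a\<in>X \<inter> S1. v a \<noteq> 0"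
      proof
        fix v assume "v \<in> lconc L1 L2"
        then obtain v1 v2 where v: "v = uconc v1 v2" "v1 \<in> L1" "v2 \<in> L2" using dec by metis
        then obtain a where a: "a \<in> X" "v1 a \<noteq> 0" using h by metis
        moreover have "a \<in> S1" using z1 v(2) a(2) by metis
        ultimately show "\<exists>a\<in>X \<inter> S1. v a \<noteq> 0" using v by (auto simp: uconc_apply)
      qed
      then obtain a where "a \<in> X \<inter> S1" "w a \<noteq> 0" using satL_P[OF s] by metis
      then show "\<exists>a\<in>X. restr w S1 a \<noteq> 0" by (auto simp: restr_def)
    qed
    show "satK L1 (restr w S1)" unfolding satK_def
    proof (intro allI impI)
      fix a b assume h: "\<forall>v\<in>L1. v b \<le> v a"
      show "restr w S1 b \<le> restr w S1 a"
      proof (cases "b \<in> S1")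
        case False then show ?thesis by (simp add: restr_def)
      next
        case bS: True
        show ?thesis
        proof (cases "a \<in> S1")
          case True
          have "\<forall>v\<in>lconc L1 L2. v b \<le> v a"
          proof
            fix v assume "v \<in> lconc L1 L2"
            then obtain v1 where "v1 \<in> L1" "\<forall>c\<in>S1. v c = v1 c" using eq1 by metis
            then show "v b \<le> v a" using h bS True by auto
          qed
          then show ?thesis using satL_K[OF s] True bS by (simp add: restr_def)
        next
          case False
          have zb: "\<forall>v\<in>L1. v b = 0" using h z1 False by fastforce
          obtain v where v: "v \<in> lconc L1 L2" "v b = w b" using satL_N[OF s] by metis
          then obtain v1 where "v1 \<in> L1" "\<forall>c\<in>S1. v c = v1 c" using eq1 by metis
          then have "w b = 0" using v bS zb by auto
          then show ?thesis by (simp add: restr_def)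
        qed
      qed
    qed
  qed
qed

lemma clsd_lconc:
  assumes c1: "clsd L1" and c2: "clsd L2" and s1: "suppIn L1 S1" and s2: "suppIn L2 S2"
    and d: "S1 \<inter> S2 = {}"
  shows "clsd (lconc L1 L2)"
  unfolding clsd_def
proof (intro allI impI)
  fix w assume s: "satL (lconc L1 L2) w"
  have ne: "L1 \<noteq> {}" "L2 \<noteq> {}" using satL_nonempty[OF s] by (auto simp: lconc_def)
  have "satL L1 (restr w S1)" by (rule restr_sat[OF s1 s2 d ne(1) s])
  then have m1: "restr w S1 \<in> L1" using c1 by (simp add: clsd_def)
  have d': "S2 \<inter> S1 = {}" using d by auto
  have s': "satL (lconc L2 L1) w" using s lconc_comm[of L1 L2] by simp
  have "satL L2 (restr w S2)" by (rule restr_sat[OF s2 s1 d' ne(2) s'])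
  then have m2: "restr w S2 \<in> L2" using c2 by (simp add: clsd_def)
  have "w = uconc (restr w S1) (restr w S2)"
  proof
    fix a
    obtain v where v: "v \<in> lconc L1 L2" "v a = w a" using satL_N[OF s] by metis
    then obtain v1 v2 where vv: "v = uconc v1 v2" "v1 \<in> L1" "v2 \<in> L2" by (auto simp: lconc_def)
    then have "a \<notin> S1 \<Longrightarrow> a \<notin> S2 \<Longrightarrow> v a = 0" using s1 s2 by (auto simp: suppIn_def uconc_apply)
    then show "w a = uconc (restr w S1) (restr w S2) a" using v d
      by (auto simp: restr_def uconc_apply)
  qed
  then show "w \<in> lconc L1 L2" using m1 m2 lconc_mem by metis
qed



lemma enat_le_1: "(enat i \<le> 1) = (i \<le> 1)" by (simp add: one_enat_def)
lemma lpow_1[simp]: "lpow L (Suc 0) = L" by simp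

lemma lang_Sym: "lang (Sym a) = {delta a}" by (simp add: delta_def)
lemma lang_Sym_one: "lang (Mult (Sym a) I_one) = {delta a}"
proof -
  have "lang (Mult (Sym a) I_one) = {w. \<exists>i. 1 \<le> i \<and> enat i \<le> 1 \<and> w \<in> lpow {delta a} i}"
    unfolding I_one_def lang_Mult lang_Sym by simp
  also have "\<dots> = lpow {delta a} 1"
  proof (rule set_eqI, rule iffI)
    fix w assume "w \<in> {w. \<exists>i. 1 \<le> i \<and> enat i \<le> 1 \<and> w \<in> lpow {delta a} i}"
    then obtain i where i: "1 \<le> i" "enat i \<le> 1" "w \<in> lpow {delta a} i" by blast
    then have "i = 1" by (simp add: enat_le_1)
    then show "w \<in> lpow {delta a} 1" using i by simp
  next
    fix w assume "w \<in> lpow {delta a} 1"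
    then show "w \<in> {w. \<exists>i. 1 \<le> i \<and> enat i \<le> 1 \<and> w \<in> lpow {delta a} i}"
      by (intro CollectI exI[of _ 1]) (simp add: one_enat_def)
  qed
  finally show ?thesis by simp
qed

lemma lang_Sym_opt: "lang (Mult (Sym a) I_opt) = {eps, delta a}"
proof -
  have "lang (Mult (Sym a) I_opt) = {w. \<exists>i. 0 \<le> i \<and> enat i \<le> 1 \<and> w \<in> lpow {delta a} i}"
    unfolding I_opt_def lang_Mult lang_Sym by simp
  also have "\<dots> = lpow {delta a} 0 \<union> lpow {delta a} 1"
  proof (rule set_eqI, rule iffI)
    fix w assume "w \<in> {w. \<exists>i. 0 \<le> i \<and> enat i \<le> 1 \<and> w \<in> lpow {delta a} i}"
    then obtain i where i: "enat i \<le> 1" "w \<in> lpow {delta a} i" by blast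
    then have "i \<le> 1" by (simp add: enat_le_1)
    then have "i = 0 \<or> i = 1" by arith
    then show "w \<in> lpow {delta a} 0 \<union> lpow {delta a} 1" using i by auto
  next
    fix w assume w: "w \<in> lpow {delta a} 0 \<union> lpow {delta a} 1"
    show "w \<in> {w. \<exists>i. 0 \<le> i \<and> enat i \<le> 1 \<and> w \<in> lpow {delta a} i}"
    proof (cases "w \<in> lpow {delta a} 0")
      case True then show ?thesis by (intro CollectI exI[of _ 0]) (simp add: zero_enat_def[symmetric])
    next
      case False then have "w \<in> lpow {delta a} 1" using w by blast
      then show ?thesis by (intro CollectI exI[of _ 1]) (simp add: one_enat_def)
    qed
  qed
  finally show ?thesis by auto
qed
lemma atomPow_one_ins:
  assumes "a \<notin> M \<union> Op"
  shows "lconc {delta a} (atomPow M Op 1) = atomPow (insert a M) Op 1"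
proof
  show "lconc {delta a} (atomPow M Op 1) \<subseteq> atomPow (insert a M) Op 1"
    using assms by (auto simp: lconc_def atomPow_def uconc_apply delta_def)
next
  show "atomPow (insert a M) Op 1 \<subseteq> lconc {delta a} (atomPow M Op 1)"
  proof
    fix w assume w: "w \<in> atomPow (insert a M) Op 1"
    have weq: "w = uconc (delta a) (w(a := 0))"
      using w by (auto simp: uconc_apply delta_def atomPow_def)
    have "w(a := 0) \<in> atomPow M Op 1" using w assms by (auto simp: atomPow_def)
    then have "uconc (delta a) (w(a := 0)) \<in> lconc {delta a} (atomPow M Op 1)" by (intro lconc_mem) simp_all
    then show "w \<in> lconc {delta a} (atomPow M Op 1)" by (subst weq)
  qed
qed

lemma atomPow_opt_ins:
  assumes "a \<notin> M \<union> Op"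
  shows "lconc {eps, delta a} (atomPow M Op 1) = atomPow M (insert a Op) 1"
proof
  show "lconc {eps, delta a} (atomPow M Op 1) \<subseteq> atomPow M (insert a Op) 1"
    using assms by (auto simp: lconc_def atomPow_def uconc_apply delta_def eps_apply)
next
  show "atomPow M (insert a Op) 1 \<subseteq> lconc {eps, delta a} (atomPow M Op 1)"
  proof
    fix w assume w: "w \<in> atomPow M (insert a Op) 1"
    have r: "w(a := 0) \<in> atomPow M Op 1" using w assms by (auto simp: atomPow_def)
    show "w \<in> lconc {eps, delta a} (atomPow M Op 1)"
    proof (cases "w a = 0")
      case True
      then have weq: "w = uconc eps (w(a := 0))" by (auto simp: uconc_apply eps_apply)
      have "uconc eps (w(a := 0)) \<in> lconc {eps, delta a} (atomPow M Op 1)" using r by (intro lconc_mem) simp_all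
      then show ?thesis by (subst weq)
    next
      case False
      then have "w a = 1" using w by (auto simp: atomPow_def)
      then have weq: "w = uconc (delta a) (w(a := 0))" by (auto simp: uconc_apply delta_def)
      have "uconc (delta a) (w(a := 0)) \<in> lconc {eps, delta a} (atomPow M Op 1)" using r by (intro lconc_mem) simp_all
      then show ?thesis by (subst weq)
    qed
  qed
qed
lemma atom_lang:
  "(\<forall>x\<in>set xs. \<exists>a I. x = Mult (Sym a) I \<and> I \<in> {I_opt, I_one}) \<Longrightarrow> distinct (syms (UConc xs)) \<Longrightarrow>
   \<exists>M Op. M \<union> Op = set (syms (UConc xs)) \<and> lang (UConc xs) = atomPow M Op 1"
proof (induction xs)
  case Nil
  have "atomPow {} {} 1 = {eps}" by (auto simp: atomPow_def eps_iff eps_apply)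
  then show ?case by (intro exI[of _ "{}"]) auto
next
  case (Cons x xs)
  obtain a I where x: "x = Mult (Sym a) I" "I \<in> {I_opt, I_one}" using Cons.prems by auto
  have d: "distinct (syms (UConc xs))" "a \<notin> set (syms (UConc xs))" using Cons.prems x by auto
  obtain M Op where MO: "M \<union> Op = set (syms (UConc xs))" "lang (UConc xs) = atomPow M Op 1"
    using Cons d by auto
  have a: "a \<notin> M \<union> Op" using d MO by auto
  show ?case
  proof (cases "I = I_one")
    case True
    have lx: "lang x = {delta a}" using x True lang_Sym_one by simp
    have "lang (UConc (x#xs)) = lconc (lang x) (lang (UConc xs))" by (rule lang_UConc_Cons)
    also have "\<dots> = atomPow (insert a M) Op 1" unfolding lx MO(2) by (rule atomPow_one_ins[OF a])
    finally have "lang (UConc (x#xs)) = atomPow (insert a M) Op 1" .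
    moreover have "insert a M \<union> Op = set (syms (UConc (x#xs)))" using MO x by auto
    ultimately show ?thesis by blast
  next
    case False
    then have "I = I_opt" using x by auto
    then have lx: "lang x = {eps, delta a}" using x lang_Sym_opt by simp
    have "lang (UConc (x#xs)) = lconc (lang x) (lang (UConc xs))" by (rule lang_UConc_Cons)
    also have "\<dots> = atomPow M (insert a Op) 1" unfolding lx MO(2) by (rule atomPow_opt_ins[OF a])
    finally have "lang (UConc (x#xs)) = atomPow M (insert a Op) 1" .
    moreover have "M \<union> insert a Op = set (syms (UConc (x#xs)))" using MO x by auto
    ultimately show ?thesis by blast
  qed
qed

lemma lpow_atomPow: "lpow (atomPow M Op 1) i = atomPow M Op i"
proof (induction i)
  case 0
  have "w \<in> atomPow M Op 0 \<longleftrightarrow> w = eps" for w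
  proof
    assume w: "w \<in> atomPow M Op 0"
    have "w a = 0" for a using w by (cases "a \<in> M"; cases "a \<in> Op") (auto simp: atomPow_def)
    then show "w = eps" using eps_iff by auto
  next
    assume "w = eps" then show "w \<in> atomPow M Op 0" by (auto simp: atomPow_def eps_apply)
  qed
  then show ?case by auto
next
  case (Suc i)
  have "lconc (atomPow M Op 1) (atomPow M Op i) = atomPow M Op (Suc i)"
  proof
    show "lconc (atomPow M Op 1) (atomPow M Op i) \<subseteq> atomPow M Op (Suc i)"
      by (fastforce simp: lconc_def atomPow_def uconc_apply)
  next
    show "atomPow M Op (Suc i) \<subseteq> lconc (atomPow M Op 1) (atomPow M Op i)"
    proof
      fix w assume w: "w \<in> atomPow M Op (Suc i)"
      define v where "v = (\<lambda>b. if b \<in> M then 1 else if b \<in> Op then min 1 (w b) else (0::nat))"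
      define u where "u = (\<lambda>b. w b - v b)"
      have weq: "w = uconc v u" using w by (auto simp: uconc_apply v_def u_def atomPow_def)
      have "v \<in> atomPow M Op 1" by (auto simp: v_def atomPow_def)
      moreover have "u \<in> atomPow M Op i" using w by (auto simp: v_def u_def atomPow_def)
      ultimately have "uconc v u \<in> lconc (atomPow M Op 1) (atomPow M Op i)" by (rule lconc_mem)
      then show "w \<in> lconc (atomPow M Op 1) (atomPow M Op i)" by (subst weq)
    qed
  qed
  then show ?case using Suc by simp
qed
lemma star_I: "w \<in> lpow L i \<Longrightarrow> w \<in> star L" by (auto simp: star_def)

lemma eps_star: "eps \<in> star L" by (auto simp: star_def intro: exI[of _ 0])

lemma star_empty: "star {} = {eps}"
proof -
  have "w = eps" if "w \<in> lpow {} i" for w i using that by (cases i) (auto simp: lconc_def)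
  then show ?thesis using eps_star by (auto simp: star_def)
qed

lemma star_union: "star (L1 \<union> L2) = lconc (star L1) (star L2)"
proof
  have "lpow (L1 \<union> L2) i \<subseteq> lconc (star L1) (star L2)" for i
  proof (induction i)
    case 0
    show ?case using lconc_mem[OF eps_star eps_star] by simp
  next
    case (Suc i)
    show ?case
    proof
      fix w assume "w \<in> lpow (L1 \<union> L2) (Suc i)"
      then obtain x y where xy: "w = uconc x y" "x \<in> L1 \<union> L2" "y \<in> lpow (L1 \<union> L2) i"
        by (auto simp: lconc_def)
      then have "y \<in> lconc (star L1) (star L2)" using Suc by auto
      then obtain y1 y2 where y: "y = uconc y1 y2" "y1 \<in> star L1" "y2 \<in> star L2"
        by (auto simp: lconc_def)
      obtain j1 j2 where j: "y1 \<in> lpow L1 j1" "y2 \<in> lpow L2 j2" using y by (auto simp: star_def)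
      show "w \<in> lconc (star L1) (star L2)"
      proof (cases "x \<in> L1")
        case True
        have "uconc x y1 \<in> lpow L1 (Suc j1)" using True j by (auto intro: lconc_mem)
        then have "uconc x y1 \<in> star L1" by (rule star_I)
        then have "uconc (uconc x y1) y2 \<in> lconc (star L1) (star L2)" using y by (intro lconc_mem)
        moreover have "w = uconc (uconc x y1) y2" using xy y by (simp add: uconc_assoc)
        ultimately show ?thesis by simp
      next
        case False
        then have xL2: "x \<in> L2" using xy by auto
        have "uconc x y2 \<in> lpow L2 (Suc j2)" using xL2 j by (auto intro: lconc_mem)
        then have "uconc x y2 \<in> star L2" by (rule star_I)
        then have "uconc y1 (uconc x y2) \<in> lconc (star L1) (star L2)" using y by (intro lconc_mem)
        moreover have "w = uconc y1 (uconc x y2)" using xy y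
          by (metis uconc_assoc uconc_comm)
        ultimately show ?thesis by simp
      qed
    qed
  qed
  then show "star (L1 \<union> L2) \<subseteq> lconc (star L1) (star L2)" by (auto simp: star_def)
next
  show "lconc (star L1) (star L2) \<subseteq> star (L1 \<union> L2)"
  proof
    fix w assume "w \<in> lconc (star L1) (star L2)"
    then obtain y1 y2 j1 j2 where y: "w = uconc y1 y2" "y1 \<in> lpow L1 j1" "y2 \<in> lpow L2 j2"
      by (auto simp: lconc_def star_def)
    have "y1 \<in> lpow (L1 \<union> L2) j1" "y2 \<in> lpow (L1 \<union> L2) j2"
      using y lpow_mono[of L1 "L1 \<union> L2"] lpow_mono[of L2 "L1 \<union> L2"] by auto
    then have "uconc y1 y2 \<in> lpow (L1 \<union> L2) (j1 + j2)" by (rule lpow_add)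
    then show "w \<in> star (L1 \<union> L2)" using y by (auto simp: star_def)
  qed
qed

lemma star_insert_eps: "star (insert eps L) = star L"
proof
  have "lpow (insert eps L) i \<subseteq> star L" for i
  proof (induction i)
    case 0 then show ?case using eps_star by simp
  next
    case (Suc i)
    show ?case
    proof
      fix w assume "w \<in> lpow (insert eps L) (Suc i)"
      then obtain x y where xy: "w = uconc x y" "x \<in> insert eps L" "y \<in> lpow (insert eps L) i"
        by (auto simp: lconc_def)
      then have "y \<in> star L" using Suc by auto
      then obtain j where j: "y \<in> lpow L j" by (auto simp: star_def)
      show "w \<in> star L"
      proof (cases "x = eps")
        case True then have "w = y" using xy by simp
        then show ?thesis using j star_I by metis
      next
        case False
        then have "x \<in> L" using xy by auto
        then have "uconc x y \<in> lpow L (Suc j)" using j by (auto intro: lconc_mem)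
        then show ?thesis using xy star_I by metis
      qed
    qed
  qed
  then show "star (insert eps L) \<subseteq> star L" by (auto simp: star_def)
next
  show "star L \<subseteq> star (insert eps L)" using lpow_mono[of L "insert eps L"] by (auto simp: star_def)
qed

lemma suppIn_star: "suppIn L S \<Longrightarrow> suppIn (star L) S"
  using suppIn_lpow unfolding suppIn_def star_def by blast

lemma star_atom: "star (atomPow M Op 1) = {w. \<exists>i. w \<in> atomPow M Op i}"
  unfolding star_def lpow_atomPow by simp

lemma clsd_star_atom: "clsd {w::('a::finite) uword. \<exists>i. w \<in> atomPow M Op i}"
  unfolding clsd_def
proof (intro allI impI)
  fix w :: "'a uword"
  let ?L = "{w::('a::finite) uword. \<exists>i. w \<in> atomPow M Op i}"
  assume s: "satL ?L w"
  have out: "w a = 0" if "a \<notin> M \<union> Op" for a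
  proof -
    obtain v where "v \<in> ?L" "v a = w a" using satL_N[OF s] by metis
    then show ?thesis using that by (auto simp: atomPow_def)
  qed
  show "w \<in> ?L"
  proof (cases "M = {}")
    case True
    have "w \<in> atomPow M Op (sum w UNIV)"
      using True out by (auto simp: atomPow_def intro: member_le_sum)
    then show ?thesis by auto
  next
    case False
    then obtain c where c: "c \<in> M" by auto
    have "w a = w c" if "a \<in> M" for a
    proof -
      have "\<forall>v\<in>?L. v a \<le> v c" "\<forall>v\<in>?L. v c \<le> v a" using that c by (auto simp: atomPow_def)
      then have "w a \<le> w c" "w c \<le> w a" using satL_K[OF s] by auto
      then show ?thesis by simp
    qed
    moreover have "w a \<le> w c" if "a \<in> Op" for a
    proof -
      have "\<forall>v\<in>?L. v a \<le> v c" using that c by (auto simp: atomPow_def)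
      then show ?thesis using satL_K[OF s] by auto
    qed
    ultimately have "w \<in> atomPow M Op (w c)" using out by (auto simp: atomPow_def)
    then show ?thesis by auto
  qed
qed


lemma distinct_concat_same:
  "distinct (concat (map f ys)) \<Longrightarrow> y \<in> set ys \<Longrightarrow> y' \<in> set ys \<Longrightarrow> x \<in> set (f y) \<Longrightarrow> x \<in> set (f y') \<Longrightarrow> y = y'"
  by (induction ys) auto

lemma distinct_concat_elem: "distinct (concat (map f ys)) \<Longrightarrow> y \<in> set ys \<Longrightarrow> distinct (f y)"
  by (induction ys) auto

lemma lang_Mult_one: "lang (Mult e I_one) = lang e"
proof -
  have "lang (Mult e I_one) = {w. \<exists>i. 1 \<le> i \<and> enat i \<le> 1 \<and> w \<in> lpow (lang e) i}"
    unfolding I_one_def lang_Mult by simp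
  also have "\<dots> = lpow (lang e) 1"
  proof (rule set_eqI, rule iffI)
    fix w assume "w \<in> {w. \<exists>i. 1 \<le> i \<and> enat i \<le> 1 \<and> w \<in> lpow (lang e) i}"
    then obtain i where i: "1 \<le> i" "enat i \<le> 1" "w \<in> lpow (lang e) i" by blast
    then have "i = 1" by (simp add: enat_le_1)
    then show "w \<in> lpow (lang e) 1" using i by simp
  next
    fix w assume "w \<in> lpow (lang e) 1"
    then show "w \<in> {w. \<exists>i. 1 \<le> i \<and> enat i \<le> 1 \<and> w \<in> lpow (lang e) i}"
      by (intro CollectI exI[of _ 1]) (simp add: one_enat_def)
  qed
  finally show ?thesis by simp
qed

lemma lang_Mult_opt: "lang (Mult e I_opt) = insert eps (lang e)"
proof -
  have "lang (Mult e I_opt) = {w. \<exists>i. 0 \<le> i \<and> enat i \<le> 1 \<and> w \<in> lpow (lang e) i}"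
    unfolding I_opt_def lang_Mult by simp
  also have "\<dots> = lpow (lang e) 0 \<union> lpow (lang e) 1"
  proof (rule set_eqI, rule iffI)
    fix w assume "w \<in> {w. \<exists>i. 0 \<le> i \<and> enat i \<le> 1 \<and> w \<in> lpow (lang e) i}"
    then obtain i where i: "enat i \<le> 1" "w \<in> lpow (lang e) i" by blast
    then have "i \<le> 1" by (simp add: enat_le_1)
    then have "i = 0 \<or> i = 1" by arith
    then show "w \<in> lpow (lang e) 0 \<union> lpow (lang e) 1" using i by auto
  next
    fix w assume w: "w \<in> lpow (lang e) 0 \<union> lpow (lang e) 1"
    show "w \<in> {w. \<exists>i. 0 \<le> i \<and> enat i \<le> 1 \<and> w \<in> lpow (lang e) i}"
    proof (cases "w \<in> lpow (lang e) 0")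
      case True then show ?thesis by (intro CollectI exI[of _ 0]) (simp add: zero_enat_def[symmetric])
    next
      case False then have "w \<in> lpow (lang e) 1" using w by blast
      then show ?thesis by (intro CollectI exI[of _ 1]) (simp add: one_enat_def)
    qed
  qed
  finally show ?thesis by auto
qed

lemma lang_Mult_star: "lang (Mult e I_star) = star (lang e)"
  unfolding I_star_def lang_Mult star_def by simp

lemma lang_Mult_plus: "lang (Mult e I_plus) = {w. \<exists>i. 1 \<le> i \<and> w \<in> lpow (lang e) i}"
  unfolding I_plus_def lang_Mult by simp

lemma plus_eps: "eps \<in> L \<Longrightarrow> {w. \<exists>i. 1 \<le> i \<and> w \<in> lpow L i} = star L"
proof (rule set_eqI, rule iffI)
  fix w assume "w \<in> {w. \<exists>i. 1 \<le> i \<and> w \<in> lpow L i}"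
  then show "w \<in> star L" using star_I by blast
next
  fix w assume e: "eps \<in> L" and "w \<in> star L"
  then obtain i where "w \<in> lpow L i" by (auto simp: star_def)
  then have "uconc eps w \<in> lconc L (lpow L i)" using e by (intro lconc_mem)
  then have "w \<in> lpow L (Suc i)" by simp
  then show "w \<in> {w. \<exists>i. 1 \<le> i \<and> w \<in> lpow L i}" by (intro CollectI exI[of _ "Suc i"]) simp
qed

lemma plus_noeps: "eps \<notin> L \<Longrightarrow> {w. \<exists>i. 1 \<le> i \<and> w \<in> lpow L i} = star L - {eps}"
proof (rule set_eqI, rule iffI)
  fix w assume e: "eps \<notin> L" and "w \<in> {w. \<exists>i. 1 \<le> i \<and> w \<in> lpow L i}"
  then obtain i where i: "1 \<le> i" "w \<in> lpow L i" by blast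
  then obtain j where j: "i = Suc j" by (cases i) auto
  then obtain x y where xy: "w = uconc x y" "x \<in> L" using i by (auto simp: lconc_def)
  then have "x \<noteq> eps" using e by auto
  then have "w \<noteq> eps" using xy uconc_eq_eps by metis
  then show "w \<in> star L - {eps}" using i star_I by blast
next
  fix w assume "w \<in> star L - {eps}"
  then obtain i where i: "w \<in> lpow L i" "w \<noteq> eps" by (auto simp: star_def)
  then have "i \<noteq> 0" by (cases i) auto
  then show "w \<in> {w. \<exists>i. 1 \<le> i \<and> w \<in> lpow L i}" using i by (intro CollectI exI[of _ i]) simp
qed

lemma satL_self: "w \<in> L \<Longrightarrow> satL L w"
  unfolding satL_def satC_def satN_def satP_def satK_def by auto



lemma atom_lang': "is_atom A \<Longrightarrow> distinct (syms A) \<Longrightarrow>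
   \<exists>M Op. M \<union> Op = set (syms A) \<and> lang A = atomPow M Op 1"
  unfolding is_atom_def using atom_lang by blast

lemma lang_elem: assumes "lang A = atomPow M Op 1" shows
  "lang (Mult A (n, m, opt)) = {w. \<exists>i. n \<le> i \<and> enat i \<le> m \<and> w \<in> atomPow M Op i} \<union> (if opt then {eps} else {})"
  unfolding lang_Mult assms lpow_atomPow by simp

lemma enat_max_le: "enat x \<le> m \<Longrightarrow> enat y \<le> m \<Longrightarrow> enat (max x y) \<le> m"
  by (simp add: max_def)

lemma clause_main:
  fixes w :: "('a::finite) uword"
  assumes ys: "\<forall>y\<in>set ys. \<exists>A I. y = Mult A I \<and> is_atom A \<and> valid_interval I"
    and dist: "distinct (concat (map syms ys))"
    and L1: "lang (Disj ys) \<subseteq> L" and L2: "L \<subseteq> insert eps (lang (Disj ys))"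
    and s: "satL L w" and ne: "w \<noteq> eps"
  shows "w \<in> lang (Disj ys)"
proof -
  obtain a0 where a0: "w a0 \<noteq> 0" using ne eps_iff by auto
  obtain v0 where v0: "v0 \<in> L" "v0 a0 = w a0" using satL_N[OF s] by metis
  have "v0 \<noteq> eps" using v0 a0 by (auto simp: eps_apply)
  then have "v0 \<in> lang (Disj ys)" using v0 L2 by auto
  then obtain y0 where y0: "y0 \<in> set ys" "v0 \<in> lang y0" by auto
  have a0y: "a0 \<in> set (syms y0)" using supp_lang[of y0] y0 v0 a0 unfolding suppIn_def by auto
  obtain A I where AI: "y0 = Mult A I" "is_atom A" "valid_interval I" using ys y0 by metis
  obtain n m opt where I: "I = (n, m, opt)" by (cases I) auto
  have nm: "enat n \<le> m" using AI I by (simp add: valid_interval_def)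
  have "distinct (syms y0)" using distinct_concat_elem[OF dist y0(1)] .
  then have "distinct (syms A)" using AI by simp
  then obtain M Op where MO: "M \<union> Op = set (syms A)" "lang A = atomPow M Op 1"
    using atom_lang' AI by metis
  let ?S = "M \<union> Op"
  have Sy0: "set (syms y0) = ?S" using AI MO by simp
  have ly0: "lang y0 = {w. \<exists>i. n \<le> i \<and> enat i \<le> m \<and> w \<in> atomPow M Op i} \<union> (if opt then {eps} else {})"
    using AI I lang_elem[OF MO(2)] by simp
  have H: "(\<forall>b\<in>?S. v b = 0) \<or> (\<exists>i. n \<le> i \<and> enat i \<le> m \<and> v \<in> atomPow M Op i)" if vL: "v \<in> L" for v
  proof (cases "v = eps")
    case True then show ?thesis by (simp add: eps_apply)
  next
    case False
    then have "v \<in> lang (Disj ys)" using vL L2 by auto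
    then obtain y where y: "y \<in> set ys" "v \<in> lang y" by auto
    show ?thesis
    proof (cases "y = y0")
      case True
      then show ?thesis using y(2) ly0 False by (auto split: if_splits)
    next
      case False
      have "v b = 0" if "b \<in> ?S" for b
      proof (rule ccontr)
        assume "v b \<noteq> 0"
        then have "b \<in> set (syms y)" using supp_lang[of y] y unfolding suppIn_def by auto
        moreover have "b \<in> set (syms y0)" using Sy0 that by simp
        ultimately have "y = y0" using distinct_concat_same[OF dist y(1) y0(1)] by metis
        then show False using False by simp
      qed
      then show ?thesis by auto
    qed
  qed
  have a0S: "a0 \<in> ?S" using a0y Sy0 by simp
  have supp: "b \<in> ?S" if wb: "w b \<noteq> 0" for b
  proof -
    obtain v where v: "v \<in> L" "v a0 \<noteq> 0" "v b \<noteq> 0" using satL_C[OF s a0 wb] by metis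
    then obtain i where "v \<in> atomPow M Op i" using H[OF v(1)] a0S by auto
    then show ?thesis using v(3) by (auto simp: atomPow_def)
  qed
  have out: "w b = 0" if "b \<notin> ?S" for b using supp that by auto
  show ?thesis
  proof (cases "M = {}")
    case False
    then obtain c where c: "c \<in> M" by auto
    have cS: "c \<in> ?S" using c by simp
    have eqM: "w a = w c" if "a \<in> M" for a
    proof -
      have "\<forall>v\<in>L. v a \<le> v c" "\<forall>v\<in>L. v c \<le> v a"
        using H that c by (fastforce simp: atomPow_def)+
      then have "w a \<le> w c" "w c \<le> w a" using satL_K[OF s] by auto
      then show ?thesis by simp
    qed
    have leO: "w a \<le> w c" if "a \<in> Op" for a
    proof -
      have "\<forall>v\<in>L. v a \<le> v c" using H that c by (fastforce simp: atomPow_def)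
      then show ?thesis using satL_K[OF s] by auto
    qed
    have "w c \<noteq> 0"
    proof
      assume "w c = 0"
      then have "w a0 = 0" using a0S eqM leO by auto
      then show False using a0 by simp
    qed
    then obtain v where v: "v \<in> L" "v c = w c" "v c \<noteq> 0" using satL_N[OF s] by metis
    then obtain i where i: "n \<le> i" "enat i \<le> m" "v \<in> atomPow M Op i" using H[OF v(1)] cS by auto
    then have "v c = i" using c by (auto simp: atomPow_def)
    then have wc: "w c = i" using v by simp
    have "w \<in> atomPow M Op i" using eqM leO out wc by (auto simp: atomPow_def)
    then have "w \<in> lang y0" using ly0 i by auto
    then show ?thesis using y0 by auto
  next
    case True
    define k where "k = max n (Max (range w))"
    have "Max (range w) \<in> range w" by (rule Max_in) auto
    then obtain b where b: "Max (range w) = w b" by (erule rangeE)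
    have wle: "w a \<le> k" for a unfolding k_def by (simp add: le_max_iff_disj)
    have "enat (w b) \<le> m"
    proof (cases "w b = 0")
      case True then show ?thesis using nm by (simp add: zero_enat_def[symmetric])
    next
      case False
      have bS: "b \<in> ?S" using supp False by simp
      obtain v where v: "v \<in> L" "v b = w b" using satL_N[OF s] by metis
      then obtain i where i: "n \<le> i" "enat i \<le> m" "v \<in> atomPow M Op i"
        using H[OF v(1)] bS False by auto
      have "v b \<le> i" using i(3) bS True by (auto simp: atomPow_def)
      then show ?thesis using i(2) v(2) by (metis enat_ord_simps(1) order_trans)
    qed
    then have km: "enat k \<le> m" unfolding k_def b using nm by (rule enat_max_le[rotated])
    have "w \<in> atomPow M Op k" using True wle out by (auto simp: atomPow_def)
    then have "w \<in> lang y0" using ly0 km by (auto simp: k_def)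
    then show ?thesis using y0 by auto
  qed
qed



lemma clsd_clause:
  fixes D :: "('a::finite) expr"
  assumes c: "is_clause D" and d: "distinct (syms D)"
    and L1: "lang D \<subseteq> L" and L2: "L \<subseteq> insert eps (lang D)"
  shows "clsd L"
  unfolding clsd_def
proof (intro allI impI)
  fix w assume s: "satL L w"
  obtain ys where ys: "D = Disj ys" "\<forall>y\<in>set ys. \<exists>A I. y = Mult A I \<and> is_atom A \<and> valid_interval I"
    using c unfolding is_clause_def by metis
  show "w \<in> L"
  proof (cases "w = eps")
    case True then show ?thesis using satL_eps s by auto
  next
    case False
    have "w \<in> lang (Disj ys)"
      by (rule clause_main[OF ys(2) _ _ _ s False]) (use d L1 L2 ys(1) in auto)
    then show ?thesis using L1 ys(1) by auto
  qed
qed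

lemma clsd_star_elem:
  fixes y :: "('a::finite) expr"
  assumes "\<exists>A I. y = Mult A I \<and> is_atom A \<and> I \<in> {I_opt, I_one}" and d: "distinct (syms y)"
  shows "clsd (star (lang y))"
proof -
  obtain A I where AI: "y = Mult A I" "is_atom A" "I \<in> {I_opt, I_one}" using assms by metis
  have "distinct (syms A)" using d AI by simp
  then obtain M Op where MO: "lang A = atomPow M Op 1" using atom_lang' AI by metis
  have "star (lang y) = star (lang A)"
    using AI by (auto simp: lang_Mult_one lang_Mult_opt star_insert_eps)
  also have "\<dots> = {w. \<exists>i. w \<in> atomPow M Op i}" unfolding MO by (rule star_atom)
  finally show ?thesis using clsd_star_atom by simp
qed

lemma clsd_star_simple:
  fixes ys :: "('a::finite) expr list"
  shows "\<forall>y\<in>set ys. \<exists>A I. y = Mult A I \<and> is_atom A \<and> I \<in> {I_opt, I_one} \<Longrightarrow>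
    distinct (concat (map syms ys)) \<Longrightarrow> clsd (star (lang (Disj ys)))"
proof (induction ys)
  case Nil
  show ?case by (simp add: clsd_eps star_empty)
next
  case (Cons y ys)
  have l: "lang (Disj (y#ys)) = lang y \<union> lang (Disj ys)" by simp
  have c1: "clsd (star (lang y))" using Cons.prems by (intro clsd_star_elem) auto
  have c2: "clsd (star (lang (Disj ys)))" using Cons by auto
  have s1: "suppIn (star (lang y)) (set (syms y))" by (rule suppIn_star[OF supp_lang])
  have s2: "suppIn (star (lang (Disj ys))) (set (syms (Disj ys)))" by (rule suppIn_star[OF supp_lang])
  have dj: "set (syms y) \<inter> set (syms (Disj ys)) = {}" using Cons.prems by auto
  show ?case unfolding l star_union by (rule clsd_lconc[OF c1 c2 s1 s2 dj])
qed

lemma clsd_comp: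
  fixes z :: "('a::finite) expr"
  assumes z: "\<exists>D I. z = Mult D I \<and>
          ((is_simple_clause D \<and> I \<in> {I_plus, I_star}) \<or> (is_clause D \<and> I \<in> {I_one, I_opt}))"
    and d: "distinct (syms z)"
  shows "clsd (lang z)"
proof -
  obtain D I where DI: "z = Mult D I"
    "(is_simple_clause D \<and> I \<in> {I_plus, I_star}) \<or> (is_clause D \<and> I \<in> {I_one, I_opt})"
    using z by metis
  have dD: "distinct (syms D)" using d DI by simp
  show ?thesis
  proof (cases "is_clause D \<and> I \<in> {I_one, I_opt}")
    case True
    then show ?thesis
    proof (cases "I = I_one")
      case True
      have "clsd (lang D)" using clsd_clause[of D "lang D"] dD \<open>is_clause D \<and> _\<close> by auto
      then show ?thesis using DI True by (simp add: lang_Mult_one)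
    next
      case False
      then have "I = I_opt" using True by auto
      have "clsd (insert eps (lang D))" using clsd_clause[of D "insert eps (lang D)"] dD True by auto
      then show ?thesis using DI \<open>I = I_opt\<close> by (simp add: lang_Mult_opt)
    qed
  next
    case False
    then have sc: "is_simple_clause D" "I \<in> {I_plus, I_star}" using DI by auto
    obtain ys where ys: "D = Disj ys" "\<forall>y\<in>set ys. \<exists>A I. y = Mult A I \<and> is_atom A \<and> I \<in> {I_opt, I_one}"
      using sc(1) unfolding is_simple_clause_def by metis
    have cs: "clsd (star (lang D))" using clsd_star_simple[OF ys(2)] dD ys(1) by simp
    show ?thesis
    proof (cases "I = I_star")
      case True then show ?thesis using DI cs by (simp add: lang_Mult_star)
    next
      case False
      then have Ip: "I = I_plus" using sc by auto
      show ?thesis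
      proof (cases "eps \<in> lang D")
        case True show ?thesis unfolding DI(1) Ip lang_Mult_plus plus_eps[OF True] by (rule cs)
      next
        case False show ?thesis unfolding DI(1) Ip lang_Mult_plus plus_noeps[OF False] by (rule clsd_minus_eps[OF cs])
      qed
    qed
  qed
qed

lemma clsd_UConc:
  fixes zs :: "('a::finite) expr list"
  shows "\<forall>z\<in>set zs. \<exists>D I. z = Mult D I \<and>
          ((is_simple_clause D \<and> I \<in> {I_plus, I_star}) \<or> (is_clause D \<and> I \<in> {I_one, I_opt})) \<Longrightarrow>
    distinct (syms (UConc zs)) \<Longrightarrow> clsd (lang (UConc zs))"
proof (induction zs)
  case Nil then show ?case using clsd_eps by simp
next
  case (Cons z zs)
  have c1: "clsd (lang z)" using Cons.prems by (intro clsd_comp) auto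
  have c2: "clsd (lang (UConc zs))" using Cons by auto
  have dj: "set (syms z) \<inter> set (syms (UConc zs)) = {}" using Cons.prems by auto
  show ?case unfolding lang_UConc_Cons by (rule clsd_lconc[OF c1 c2 supp_lang supp_lang dj])
qed

lemma clsd_DIME: "is_DIME (E :: ('a::finite) expr) \<Longrightarrow> clsd (lang E)"
  unfolding is_DIME_def using clsd_UConc by metis

definition satD where
  "satD T w = (case T of (C, N, P, K) \<Rightarrow>
     (\<forall>a b. w a \<noteq> 0 \<longrightarrow> w b \<noteq> 0 \<longrightarrow> (a, b) \<notin> C) \<and> (\<forall>a. (a, w a) \<in> N) \<and>
     (\<forall>X\<in>P. \<exists>a\<in>X. w a \<noteq> 0) \<and> (\<forall>a b. (a, b) \<in> K \<longrightarrow> w b \<le> w a))"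

lemma satL_Delta: "satL (lang E) w = satD (Delta E) w"
proof -
  have "satC (lang E) w = (\<forall>a b. w a \<noteq> 0 \<longrightarrow> w b \<noteq> 0 \<longrightarrow> (a, b) \<notin> C_of E)"
    unfolding satC_def C_of_def by auto
  moreover have "satN (lang E) w = (\<forall>a. (a, w a) \<in> N_of E)"
  proof -
    have "((a, x) \<in> N_of E) = (\<exists>v\<in>lang E. v a = x)" for a x unfolding N_of_def by auto
    then show ?thesis unfolding satN_def by simp
  qed
  moreover have "satP (lang E) w = (\<forall>X\<in>P_of E. \<exists>a\<in>X. w a \<noteq> 0)"
    unfolding satP_def P_of_def by auto
  moreover have "satK (lang E) w = (\<forall>a b. (a, b) \<in> K_of E \<longrightarrow> w b \<le> w a)"
    unfolding satK_def K_of_def by auto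
  ultimately show ?thesis unfolding satL_def satD_def Delta_def by simp
qed

lemma lang_char: "is_DIME (E :: ('a::finite) expr) \<Longrightarrow> lang E = {w. satD (Delta E) w}"
  using clsd_DIME[of E] satL_self[of _ "lang E"] unfolding clsd_def satL_Delta[symmetric] by auto

theorem corollary1:
  fixes E E' :: "('a::finite) expr"
  assumes "is_DIME E" and "is_DIME E'"
  shows "lang E = lang E' \<longleftrightarrow> Delta E = Delta E'"
proof
  assume "lang E = lang E'"
  then show "Delta E = Delta E'" unfolding Delta_def C_of_def N_of_def P_of_def K_of_def by simp
next
  assume "Delta E = Delta E'"
  then show "lang E = lang E'" using lang_char[OF assms(1)] lang_char[OF assms(2)] by simp
qed


end
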